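(* Let $q\ge2$ be an integer. (1) Let $\alpha\in\mathbb{R}\setminus\mathbb{Q}$. For every $k\in\mathbb{N}$ and every intervals $I_0,\dots,I_{k-1}\subset[0,1)$ of positive length, there exist $n\in\mathbb{N}_0$ and $m\in\mathbb{N}$ such that $\alpha s_q(n+jm)\bmod 1\in I_j$ for all $0\le j<k$. (2) Let $Q\in\mathbb{N}$ be coprime to $q-1$. For every $k\in\mathbb{N}$ and every $r_0,\dots,r_{k-1}\in\{0,1,\dots,Q-1\}$ there exist $n\in\mathbb{N}_0$ and $m\in\mathbb{N}$ such that $s_q(n+jm)\equiv r_j\pmod Q$ for all $0\le j<k$. Moreover, in both (1) and (2), with all parameters other than $N$ fixed, the number of pairs $(n,m)$ such that the progression $n,n+m,\dots,n+(k-1)m$ is contained in $\{0,1,\dots,N-1\}$ and has the stated property is $\asymp N^2$ as $N\to\infty$ (i.e. bounded above and below by positive constant multiples of $N^2$ for all large $N$).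
   Context: $s_q(n)$ denotes the sum of the digits of $n$ in its base-$q$ expansion. $\mathbb{N}=\{1,2,\dots\}$, $\mathbb{N}_0=\mathbb{N}\cup\{0\}$. *)

theory Defs
  imports "HOL-Analysis.Analysis"
begin

function digit_sum :: "nat \<Rightarrow> nat \<Rightarrow> nat" where
  "digit_sum q n = (if q < 2 \<or> n = 0 then 0 else n mod q + digit_sum q (n div q))"
  by auto
termination by (relation "Wellfounded.measure snd") auto

declare digit_sum.simps [simp del]

end

theory Submission
  imports Defs "HOL-Number_Theory.Cong" "HOL-Analysis.Kronecker_Approximation_Theorem"
begin


lemma ds_step: "q \<ge> 2 \<Longrightarrow> digit_sum q z = z mod q + digit_sum q (z div q)"
  by (cases "z = 0") (simp_all add: digit_sum.simps[of q z] digit_sum.simps[of q 0])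

lemma ds_concat: assumes "q \<ge> 2" "x < q ^ L"
  shows "digit_sum q (x + q ^ L * y) = digit_sum q x + digit_sum q y"
  using assms(2)
proof (induction L arbitrary: x)
  case 0
  then show ?case by (simp add: digit_sum.simps[of q 0])
next
  case (Suc L)
  have q0: "q > 0" using assms by simp
  have "x div q < q ^ L" using Suc.prems q0 by (simp add: div_less_iff_less_mult mult.commute)
  have e1: "(x + q ^ Suc L * y) mod q = x mod q" by (simp add: mult.assoc)
  have e2: "(x + q ^ Suc L * y) div q = x div q + q ^ L * y"
    using q0 by (simp add: mult.assoc)
  show ?case
    apply (subst ds_step[OF assms(1)])
    apply (subst ds_step[OF assms(1), of x])
    using Suc.IH[OF \<open>x div q < q ^ L\<close>] e1 e2 by simp
qed

lemma ds_small: "q \<ge> 2 \<Longrightarrow> 0 < x \<Longrightarrow> x < q \<Longrightarrow> digit_sum q x = x"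
  using ds_step[of q x] by (simp add: digit_sum.simps[of q 0])

lemma k_lt_pow: "q \<ge> 2 \<Longrightarrow> (k::nat) < q ^ k"
proof -
  assume "q \<ge> 2"
  have "k < 2 ^ k" by (rule less_exp)
  also have "(2::nat) ^ k \<le> q ^ k" using \<open>q \<ge> 2\<close> by (simp add: power_mono)
  finally show ?thesis .
qed

lemma block_lt: assumes "q \<ge> 2" "1 \<le> t" "t \<le> q ^ k"
  shows "digit_sum q (q ^ (k + u) - t) = digit_sum q (q ^ k - t) + u * (q - 1)"
proof (induction u)
  case 0
  then show ?case by simp
next
  case (Suc u)
  have pk: "q ^ k \<le> q ^ (k + u)" using assms(1) by (simp add: power_increasing)
  have e: "q ^ (k + Suc u) = q ^ (k + u) * (q - 1) + q ^ (k + u)" using assms(1)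
    by (cases q) (auto simp: algebra_simps)
  have "q ^ (k + Suc u) - t = (q ^ (k + u) - t) + q ^ (k + u) * (q - 1)"
  proof -
    have "t \<le> q ^ (k + u)" using assms pk by linarith
    thus ?thesis unfolding e by linarith
  qed
  moreover have "q ^ (k + u) - t < q ^ (k + u)" using assms pk by simp
  ultimately have "digit_sum q (q ^ (k + Suc u) - t) = digit_sum q (q ^ (k + u) - t) + digit_sum q (q - 1)"
    using ds_concat[OF assms(1)] by simp
  moreover have "digit_sum q (q - 1) = q - 1" using ds_small[OF assms(1), of "q - 1"] assms(1) by simp
  ultimately show ?case using Suc.IH by simp
qed

lemma block: assumes "q \<ge> 2" "1 \<le> j0" "j0 \<le> k" "j < k"
  shows "digit_sum q (q ^ (k + u) - j0 + j) = digit_sum q (q ^ k - j0 + j) + (if j < j0 then u * (q - 1) else 0)"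
proof -
  have kq: "k < q ^ k" using k_lt_pow[OF assms(1)] .
  have pk: "q ^ k \<le> q ^ (k + u)" using assms(1) by (simp add: power_increasing)
  show ?thesis
  proof (cases "j < j0")
    case True
    have "j0 \<le> q ^ (k + u)" using assms kq pk by linarith
    hence a: "q ^ (k + u) - j0 + j = q ^ (k + u) - (j0 - j)" using True by simp
    have b: "q ^ k - j0 + j = q ^ k - (j0 - j)" using True assms kq by simp
    show ?thesis unfolding a b using block_lt[OF assms(1), of "j0 - j" k u] True assms kq by simp
  next
    case False
    have a: "q ^ (k + u) - j0 + j = (j - j0) + q ^ (k + u) * 1" using False assms kq pk by linarith
    have b: "q ^ k - j0 + j = (j - j0) + q ^ k * 1" using False assms kq by linarith
    have c: "j - j0 < q ^ k" using assms kq by simp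
    show ?thesis unfolding a b using ds_concat[OF assms(1), of "j - j0" k 1] ds_concat[OF assms(1), of "j - j0" "k + u" 1] c pk False
      by simp
  qed
qed

lemma combine: assumes "q \<ge> 2"
  and "\<forall>j<k. digit_sum q (n1 + j * m1) = f j" "\<forall>j<k. digit_sum q (n2 + j * m2) = g j"
  shows "\<exists>n m. m1 \<le> m \<and> m2 \<le> m \<and> (\<forall>j<k. digit_sum q (n + j * m) = f j + g j)"
proof -
  define L where "L = n1 + (k - 1) * m1"
  have L: "L < q ^ L" using k_lt_pow[OF assms(1)] .
  have "m2 \<le> m1 + q ^ L * m2" using assms(1) by (simp add: trans_le_add2)
  moreover have "digit_sum q (n1 + q ^ L * n2 + j * (m1 + q ^ L * m2)) = f j + g j" if "j < k" for j
  proof -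
    have "j * m1 \<le> (k - 1) * m1" using that by (intro mult_le_mono1) simp
    hence "n1 + j * m1 \<le> L" unfolding L_def by simp
    hence lt: "n1 + j * m1 < q ^ L" using L by linarith
    have "n1 + q ^ L * n2 + j * (m1 + q ^ L * m2) = (n1 + j * m1) + q ^ L * (n2 + j * m2)"
      by (simp add: algebra_simps)
    hence "digit_sum q (n1 + q ^ L * n2 + j * (m1 + q ^ L * m2)) = digit_sum q ((n1 + j * m1) + q ^ L * (n2 + j * m2))"
      by (rule arg_cong)
    also have "\<dots> = f j + g j" using ds_concat[OF assms(1) lt] assms(2,3) that by simp
    finally show ?thesis .
  qed
  ultimately show ?thesis by (intro exI[of _ "n1 + q ^ L * n2"] exI[of _ "m1 + q ^ L * m2"]) auto
qed

lemma blocks: assumes "q \<ge> 2" "K \<le> k"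
  shows "\<exists>n m. (1 \<le> K \<longrightarrow> 1 \<le> m) \<and> (\<forall>j<k. digit_sum q (n + j * m) =
     (\<Sum>j0\<in>{1..K}. digit_sum q (q ^ k - j0 + j)) + (\<Sum>j0\<in>{1..K}. if j < j0 then u j0 * (q - 1) else 0))"
  using assms(2)
proof (induction K)
  case 0
  show ?case by (intro exI[of _ 0]) (simp add: digit_sum.simps[of q 0])
next
  case (Suc K)
  then obtain n1 m1 where h1: "\<forall>j<k. digit_sum q (n1 + j * m1) =
     (\<Sum>j0\<in>{1..K}. digit_sum q (q ^ k - j0 + j)) + (\<Sum>j0\<in>{1..K}. if j < j0 then u j0 * (q - 1) else 0)"
    by auto
  have h2: "\<forall>j<k. digit_sum q ((q ^ (k + u (Suc K)) - Suc K) + j * 1) =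
     digit_sum q (q ^ k - Suc K + j) + (if j < Suc K then u (Suc K) * (q - 1) else 0)"
    using block[OF assms(1), of "Suc K" k] Suc.prems by simp
  obtain n m where "m1 \<le> m" "1 \<le> m" and h: "\<forall>j<k. digit_sum q (n + j * m) =
     ((\<Sum>j0\<in>{1..K}. digit_sum q (q ^ k - j0 + j)) + (\<Sum>j0\<in>{1..K}. if j < j0 then u j0 * (q - 1) else 0))
     + (digit_sum q (q ^ k - Suc K + j) + (if j < Suc K then u (Suc K) * (q - 1) else 0))"
    using combine[OF assms(1) h1 h2] by blast
  show ?case
    by (intro exI[of _ n] exI[of _ m]) (use h \<open>1 \<le> m\<close> in simp)
qed

lemma telescope: assumes "\<And>j. Suc j < k \<Longrightarrow> V (Suc j) \<le> (V j :: nat)" "j < k"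
  shows "(\<Sum>j0\<in>{Suc j..k}. (if j0 < k then V (j0 - 1) - V j0 else V (k - 1))) = V j"
proof -
  have "j \<le> k - 1" using assms(2) by simp
  thus ?thesis
  proof (induction j rule: inc_induct)
    case base
    have "{Suc (k - 1)..k} = {k}" using assms(2) by auto
    then show ?case by simp
  next
    case (step n)
    have "{Suc n..k} = insert (Suc n) {Suc (Suc n)..k}" using step.hyps by auto
    hence "(\<Sum>j0\<in>{Suc n..k}. (if j0 < k then V (j0 - 1) - V j0 else V (k - 1)))
       = (V n - V (Suc n)) + V (Suc n)" using step.hyps step.IH by simp
    also have "\<dots> = V n" using assms(1)[of n] step.hyps by simp
    finally show ?case .
  qed
qed

definition Bs :: "nat \<Rightarrow> nat \<Rightarrow> nat \<Rightarrow> nat" where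
  "Bs q k j = (\<Sum>j0\<in>{1..k}. digit_sum q (q ^ k - j0 + j))"

lemma keyE: assumes "q \<ge> 2" "k \<ge> 1" "\<And>j. Suc j < k \<Longrightarrow> V (Suc j) \<le> (V j :: nat)"
  shows "\<exists>n m. 1 \<le> m \<and> (\<forall>j<k. digit_sum q (n + j * m) = Bs q k j + (q - 1) * V j)"
proof -
  define u where "u j0 = (if j0 < k then V (j0 - 1) - V j0 else V (k - 1))" for j0
  obtain n m where "1 \<le> m" and h: "\<forall>j<k. digit_sum q (n + j * m) =
     (\<Sum>j0\<in>{1..k}. digit_sum q (q ^ k - j0 + j)) + (\<Sum>j0\<in>{1..k}. if j < j0 then u j0 * (q - 1) else 0)"
    using blocks[OF assms(1) order.refl, of k u] assms(2) by auto
  have "(\<Sum>j0\<in>{1..k}. if j < j0 then u j0 * (q - 1) else 0) = (q - 1) * V j" if "j < k" for j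
  proof -
    have "(\<Sum>j0\<in>{1..k}. if j < j0 then u j0 * (q - 1) else 0) = (\<Sum>j0\<in>{x\<in>{1..k}. j < x}. u j0 * (q - 1))"
      using sum.inter_filter[of "{1..k}" "\<lambda>j0. u j0 * (q - 1)" "\<lambda>x. j < x"] by simp
    also have "{x\<in>{1..k}. j < x} = {Suc j..k}" by auto
    also have "(\<Sum>j0\<in>{Suc j..k}. u j0 * (q - 1)) = (\<Sum>j0\<in>{Suc j..k}. u j0) * (q - 1)"
      by (simp add: sum_distrib_right)
    also have "(\<Sum>j0\<in>{Suc j..k}. u j0) = V j" unfolding u_def using telescope[of k V, OF assms(3) that] by simp
    finally show ?thesis by simp
  qed
  thus ?thesis using h \<open>1 \<le> m\<close> unfolding Bs_def by auto
qed

lemma exist2: assumes "q \<ge> 2" "k \<ge> 1" "Q \<ge> 1" "coprime Q (q - 1)"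
  shows "\<exists>n m. 1 \<le> m \<and> (\<forall>j<k. digit_sum q (n + j * m) mod Q = t j mod Q)"
proof -
  obtain x where x: "[(q - 1) * x = Suc 0] (mod Q)"
    using cong_solve_coprime_nat[of "q - 1" Q] assms(4) by (auto simp: coprime_commute)
  define w where "w j = x * (t j + (Q - 1) * Bs q k j)" for j
  define V where "V j = w j mod Q + Q * (k - j)" for j
  have mono: "V (Suc j) \<le> V j" if "Suc j < k" for j
  proof -
    have "w (Suc j) mod Q < Q" using assms(3) by simp
    hence "V (Suc j) < Q + Q * (k - Suc j)" unfolding V_def by simp
    also have "Q + Q * (k - Suc j) = Q * (k - j)"
    proof -
      have "k - j = Suc (k - Suc j)" using that by simp
      thus ?thesis by simp
    qed
    also have "\<dots> \<le> V j" unfolding V_def by simp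
    finally show ?thesis by simp
  qed
  obtain n m where "1 \<le> m" and h: "\<forall>j<k. digit_sum q (n + j * m) = Bs q k j + (q - 1) * V j"
    using keyE[OF assms(1,2), of V] mono by blast
  have "[Bs q k j + (q - 1) * V j = t j] (mod Q)" for j
  proof -
    have "[V j = w j] (mod Q)" unfolding V_def cong_def by simp
    hence "[(q - 1) * V j = (q - 1) * w j] (mod Q)" by (rule cong_mult[OF cong_refl])
    moreover have "(q - 1) * w j = ((q - 1) * x) * (t j + (Q - 1) * Bs q k j)" unfolding w_def by (simp add: ac_simps)
    moreover have "[((q - 1) * x) * (t j + (Q - 1) * Bs q k j) = Suc 0 * (t j + (Q - 1) * Bs q k j)] (mod Q)"
      by (rule cong_mult[OF x cong_refl])
    ultimately have "[(q - 1) * V j = t j + (Q - 1) * Bs q k j] (mod Q)"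
      by (metis cong_trans mult_Suc mult_0 add_0_right)
    hence "[Bs q k j + (q - 1) * V j = Bs q k j + (t j + (Q - 1) * Bs q k j)] (mod Q)"
      by (rule cong_add[OF cong_refl])
    moreover have "Bs q k j + (t j + (Q - 1) * Bs q k j) = t j + Q * Bs q k j"
      using assms(3) by (cases Q) (auto simp: algebra_simps)
    moreover have "[t j + Q * Bs q k j = t j] (mod Q)" unfolding cong_def by simp
    ultimately show ?thesis by (metis cong_trans)
  qed
  thus ?thesis using h \<open>1 \<le> m\<close> unfolding cong_def by metis
qed

lemma mono_choice: assumes "\<And>j N0. \<exists>n\<ge>N0. P j n"
  shows "\<exists>V. (\<forall>j<k. P j (V j)) \<and> (\<forall>j. Suc j < k \<longrightarrow> V (Suc j) \<le> (V j :: nat))"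
  using assms
proof (induction k arbitrary: P)
  case 0
  then show ?case by auto
next
  case (Suc k)
  obtain V' where V': "\<forall>j<k. P (Suc j) (V' j)" "\<forall>j. Suc j < k \<longrightarrow> V' (Suc j) \<le> V' j"
    using Suc.IH[of "\<lambda>j. P (Suc j)"] Suc.prems by blast
  obtain n where n: "n \<ge> V' 0" "P 0 n" using Suc.prems by blast
  define V where "V j = (if j = 0 then n else V' (j - 1))" for j
  have "\<forall>j<Suc k. P j (V j)" unfolding V_def using V' n by (auto simp: less_Suc_eq_0_disj)
  moreover have "\<forall>j. Suc j < Suc k \<longrightarrow> V (Suc j) \<le> V j" unfolding V_def using V' n
    by (auto simp: gr0_conv_Suc)
  ultimately show ?case by blast
qed

lemma density: fixes \<beta> :: real
  assumes "\<beta> \<notin> \<rat>" "0 \<le> lo" "lo < hi" "hi \<le> 1"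
  shows "\<exists>n\<ge>N0. frac (d + \<beta> * real n) \<in> {lo<..<hi}"
proof -
  define N1 where "N1 = Suc N0"
  have th: "real N1 * \<beta> \<notin> \<rat>"
  proof
    assume "real N1 * \<beta> \<in> \<rat>"
    hence "(real N1 * \<beta>) / real N1 \<in> \<rat>" by (intro Rats_divide) auto
    thus False using assms(1) unfolding N1_def by simp
  qed
  obtain h kk where kk: "kk > 0" "\<bar>of_int kk * (real N1 * \<beta>) - of_int h - ((lo + hi) / 2 - d)\<bar> < (hi - lo) / 2"
  proof -
    have "(hi - lo) / 2 > 0" using assms by simp
    from sequence_of_fractional_parts_is_dense[OF th this, where \<alpha>="(lo + hi) / 2 - d"]
    show thesis using that by blast
  qed
  define n where "n = nat kk * N1"
  have nN: "n \<ge> N0" unfolding n_def N1_def using kk(1)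
    by (metis Suc_le_eq add.commute le_add2 mult.commute mult_le_mono2 mult_Suc_right nat_0_less_mult_iff zero_less_nat_eq order_trans le_refl)
  define e where "e = of_int kk * (real N1 * \<beta>) - of_int h - ((lo + hi) / 2 - d)"
  have ee: "-(hi - lo) / 2 < e \<and> e < (hi - lo) / 2" using kk(2) unfolding e_def[symmetric] by linarith
  have rn: "real n = of_int kk * real N1" unfolding n_def using kk(1) by simp
  have "d + \<beta> * real n = of_int h + ((lo + hi) / 2 + e)" unfolding rn e_def by (simp add: algebra_simps)
  hence "frac (d + \<beta> * real n) = frac ((lo + hi) / 2 + e)" by simp
  also have "\<dots> = (lo + hi) / 2 + e" using ee assms by (subst frac_eq) (auto simp: field_simps)
  finally have "frac (d + \<beta> * real n) \<in> {lo<..<hi}" using ee by (auto simp: field_simps)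
  thus ?thesis using nN by blast
qed

lemma exist1: assumes "q \<ge> 2" "k \<ge> 1" "(\<alpha>::real) \<notin> \<rat>"
  and lh: "\<forall>j<k. 0 \<le> lo j \<and> lo j < hi j \<and> hi j \<le> 1"
  shows "\<exists>n m. 1 \<le> m \<and> (\<forall>j<k. frac (c j + \<alpha> * real (digit_sum q (n + j * m))) \<in> {lo j<..<hi j})"
proof -
  define \<beta> where "\<beta> = \<alpha> * real (q - 1)"
  have b: "\<beta> \<notin> \<rat>"
  proof
    assume "\<beta> \<in> \<rat>"
    hence "\<beta> / real (q - 1) \<in> \<rat>" by (intro Rats_divide) auto
    thus False using assms(1,3) unfolding \<beta>_def by simp
  qed
  define P where "P j v = (j < k \<longrightarrow> frac ((c j + \<alpha> * real (Bs q k j)) + \<beta> * real v) \<in> {lo j<..<hi j})" for j v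
  have "\<exists>v\<ge>N0. P j v" for j N0
  proof (cases "j < k")
    case True
    then show ?thesis unfolding P_def using density[OF b, of "lo j" "hi j" N0] lh by auto
  qed (auto simp: P_def)
  then obtain V where V: "\<forall>j<k. P j (V j)" "\<forall>j. Suc j < k \<longrightarrow> V (Suc j) \<le> V j"
    using mono_choice[of P k] by blast
  obtain n m where "1 \<le> m" and h: "\<forall>j<k. digit_sum q (n + j * m) = Bs q k j + (q - 1) * V j"
    using keyE[OF assms(1,2), of V] V(2) by blast
  have "frac (c j + \<alpha> * real (digit_sum q (n + j * m))) \<in> {lo j<..<hi j}" if "j < k" for j
  proof -
    have "real (digit_sum q (n + j * m)) = real (Bs q k j) + real (q - 1) * real (V j)"
      using h that by simp
    hence "c j + \<alpha> * real (digit_sum q (n + j * m)) = (c j + \<alpha> * real (Bs q k j)) + \<beta> * real (V j)"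
      unfolding \<beta>_def by (simp add: algebra_simps del: of_nat_diff)
    thus ?thesis using V(1) that unfolding P_def by (simp add: add.assoc)
  qed
  thus ?thesis using \<open>1 \<le> m\<close> by blast
qed



lemma finite_bound: assumes "finite A" "\<forall>x\<in>A. \<exists>n m::nat. R x n m"
  shows "\<exists>K. \<forall>x\<in>A. \<exists>n m. n \<le> K \<and> m \<le> K \<and> R x n m"
  using assms
proof (induction A rule: finite_induct)
  case empty
  then show ?case by auto
next
  case (insert y F)
  then obtain K where K: "\<forall>x\<in>F. \<exists>n m. n \<le> K \<and> m \<le> K \<and> R x n m" by auto
  obtain n0 m0 where "R y n0 m0" using insert.prems by auto
  have "\<forall>x\<in>insert y F. \<exists>n m. n \<le> max K (max n0 m0) \<and> m \<le> max K (max n0 m0) \<and> R x n m"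
  proof
    fix x assume "x \<in> insert y F"
    then consider "x = y" | "x \<in> F" by auto
    then show "\<exists>n m. n \<le> max K (max n0 m0) \<and> m \<le> max K (max n0 m0) \<and> R x n m"
    proof cases
      case 1
      have "n0 \<le> max K (max n0 m0)" "m0 \<le> max K (max n0 m0)" by simp_all
      then show ?thesis using \<open>R y n0 m0\<close> 1 by blast
    next
      case 2
      then obtain n m where "n \<le> K" "m \<le> K" "R x n m" using K by blast
      moreover have "n \<le> max K (max n0 m0)" "m \<le> max K (max n0 m0)" using \<open>n \<le> K\<close> \<open>m \<le> K\<close> by simp_all
      ultimately show ?thesis by blast
    qed
  qed
  thus ?case by blast
qed

lemma pow_between: assumes "q \<ge> (2::nat)" "X \<ge> 1"
  shows "\<exists>L. X \<le> q ^ L \<and> q ^ L < q * X"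
proof -
  define L where "L = (LEAST L. X \<le> q ^ L)"
  have ex: "X \<le> q ^ X" using k_lt_pow[OF assms(1), of X] by simp
  have a: "X \<le> q ^ L" unfolding L_def by (rule LeastI[of _ X]) (rule ex)
  have "q ^ L < q * X"
  proof (cases L)
    case 0
    have "q \<le> q * X" using assms(2) by simp
    moreover have "q ^ L = 1" using 0 by simp
    ultimately show ?thesis using assms(1) by linarith
  next
    case (Suc L')
    have "L' < (LEAST L. X \<le> q ^ L)" using Suc unfolding L_def by simp
    hence "\<not> X \<le> q ^ L'" by (rule not_less_Least)
    hence "q ^ L' < X" by simp
    thus ?thesis using Suc assms by simp
  qed
  thus ?thesis using a by blast
qed

lemma pigeon: assumes "finite S" "finite Pats" "Pats \<noteq> {}" "f ` S \<subseteq> Pats"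
  shows "\<exists>w\<in>Pats. card S \<le> card Pats * card {x\<in>S. f x = w}"
proof (rule ccontr)
  assume "\<not> ?thesis"
  hence lt: "\<forall>w\<in>Pats. card Pats * card {x\<in>S. f x = w} < card S" by auto
  have "S = (\<Union>w\<in>Pats. {x\<in>S. f x = w})" using assms(4) by auto
  moreover have "card (\<Union>w\<in>Pats. {x\<in>S. f x = w}) = (\<Sum>w\<in>Pats. card {x\<in>S. f x = w})"
    by (rule card_UN_disjoint) (use assms(1,2) in auto)
  ultimately have "card S = (\<Sum>w\<in>Pats. card {x\<in>S. f x = w})" by simp
  hence "card Pats * card S = (\<Sum>w\<in>Pats. card Pats * card {x\<in>S. f x = w})"
    by (simp add: sum_distrib_left)
  also have "\<dots> < (\<Sum>w\<in>Pats. card S)" using lt assms(2,3) by (intro sum_strict_mono) auto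
  also have "\<dots> = card Pats * card S" by simp
  finally show False by simp
qed




lemma count_lower:
  fixes pat :: "nat \<Rightarrow> nat \<Rightarrow> 'p" and P :: "nat \<Rightarrow> nat \<Rightarrow> bool"
  assumes q: "q \<ge> 2" and k: "k \<ge> 1" and fin: "finite Pats" and pin: "\<forall>a b. pat a b \<in> Pats"
  and key: "\<forall>w\<in>Pats. \<exists>n1 m1. \<forall>L a b. a + (k - 1) * b < q ^ L \<and> pat a b = w \<longrightarrow> P (a + q ^ L * n1) (b + q ^ L * m1)"
  shows "\<exists>c>0. \<forall>\<^sub>F N in sequentially. c * real N ^ 2 \<le> real (card {(n, m). 1 \<le> m \<and> m < N \<and> n + (k - 1) * m < N \<and> P n m})"
proof -
  obtain K where K: "\<forall>w\<in>Pats. \<exists>n1 m1. n1 \<le> K \<and> m1 \<le> K \<and>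
      (\<forall>L a b. a + (k - 1) * b < q ^ L \<and> pat a b = w \<longrightarrow> P (a + q ^ L * n1) (b + q ^ L * m1))"
    using finite_bound[OF fin key] by blast
  define R where "R = 1 + k * K"
  define D where "D = q * k * R"
  have "0 < q * k" using q k by simp
  hence Dpos: "D \<ge> 1" unfolding D_def R_def
    by (metis One_nat_def Suc_leI add_gr_0 mult_pos_pos zero_less_one)
  have Pne: "Pats \<noteq> {}" using pin by auto
  hence cP: "card Pats \<ge> 1" using fin by (simp add: Suc_le_eq card_gt_0_iff)
  define cc where "cc = 1 / (4 * real D ^ 2 * real (card Pats))"
  have ccpos: "cc > 0" unfolding cc_def using Dpos cP by simp
  have main: "cc * real N ^ 2 \<le> real (card {(n, m). 1 \<le> m \<and> m < N \<and> n + (k - 1) * m < N \<and> P n m})"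
    if N: "N \<ge> 4 * D" for N
  proof -
    define G where "G = {(n, m). 1 \<le> m \<and> m < N \<and> n + (k - 1) * m < N \<and> P n m}"
    have finG: "finite G" by (rule finite_subset[of _ "{..<N} \<times> {..<N}"]) (auto simp: G_def)
    define M where "M = N div D"
    have DM: "D * M \<le> N" unfolding M_def by simp
    have NDM: "N < D * M + D" unfolding M_def using Dpos
      by (metis add.commute div_mult_mod_eq mod_less_divisor mult.commute nat_add_left_cancel_less zero_less_one less_le_trans)
    have M1: "M \<ge> 1" using N NDM Dpos by (cases M) auto
    define Sq where "Sq = {..<M} \<times> {1..<M}"
    have cSq: "card Sq = M * (M - 1)" unfolding Sq_def by simp
    have finSq: "finite Sq" unfolding Sq_def by simp
    obtain w where w: "w \<in> Pats" and wc: "card Sq \<le> card Pats * card {x\<in>Sq. (\<lambda>(a,b). pat a b) x = w}"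
  proof -
      have "(\<lambda>(a,b). pat a b) ` Sq \<subseteq> Pats" using pin by auto
      from pigeon[OF finSq fin Pne this] show thesis using that by blast
    qed
    define F where "F = {x\<in>Sq. (\<lambda>(a,b). pat a b) x = w}"
    obtain n1 m1 where nm1: "n1 \<le> K" "m1 \<le> K"
      and P1: "\<forall>L a b. a + (k - 1) * b < q ^ L \<and> pat a b = w \<longrightarrow> P (a + q ^ L * n1) (b + q ^ L * m1)"
      using K w by blast
    obtain L where L: "k * M \<le> q ^ L" "q ^ L < q * (k * M)"
    proof -
      have "1 \<le> k * M" using k M1 by simp
      from pow_between[OF q this] show thesis using that by blast
    qed
    define \<phi> where "\<phi> = (\<lambda>(a::nat, b::nat). (a + q ^ L * n1, b + q ^ L * m1))"
    have inj: "inj_on \<phi> F" unfolding \<phi>_def inj_on_def by auto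
    have QR: "q ^ L * R < N"
    proof -
      have "q ^ L * R < q * (k * M) * R" using L(2) by (intro mult_strict_right_mono) (auto simp: R_def)
      also have "\<dots> = D * M" unfolding D_def by (simp add: ac_simps)
      finally show ?thesis using DM by simp
    qed
    have sub: "\<phi> ` F \<subseteq> G"
    proof
      fix y assume "y \<in> \<phi> ` F"
      then obtain a b where ab: "(a, b) \<in> F" "y = (a + q ^ L * n1, b + q ^ L * m1)"
        unfolding \<phi>_def by auto
      have a: "a < M" "1 \<le> b" "b < M" "pat a b = w" using ab(1) unfolding F_def Sq_def by auto
      have kb: "(k - 1) * b \<le> (k - 1) * M" using a by simp
      have e: "k * M = M + (k - 1) * M" using k by (cases k) auto
      have abk: "a + (k - 1) * b < k * M" using kb e a(1) by linarith
      hence abL: "a + (k - 1) * b < q ^ L" using L(1) by linarith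
      have Pa: "P (a + q ^ L * n1) (b + q ^ L * m1)" using P1 abL a(4) by blast
      have bL: "b < q ^ L" using a(3) L(1) k
        by (metis le_trans less_le_trans mult_le_mono1 mult_1 not_less)
      have "q ^ L * m1 \<le> q ^ L * (k * K)" using nm1 k
        by (intro mult_le_mono2) (metis le_trans mult_le_mono1 mult_1)
      moreover have "q ^ L * R = q ^ L + q ^ L * (k * K)" unfolding R_def by (simp add: algebra_simps)
      ultimately have m_lt: "b + q ^ L * m1 < q ^ L * R" using bL by linarith
      have nk: "n1 + (k - 1) * m1 \<le> k * K"
      proof -
        have "(k - 1) * m1 \<le> (k - 1) * K" using nm1 by simp
        hence "n1 + (k - 1) * m1 \<le> K + (k - 1) * K" using nm1 by linarith
        also have "\<dots> = k * K" using k by (cases k) auto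
        finally show ?thesis .
      qed
      have eq1: "a + q ^ L * n1 + (k - 1) * (b + q ^ L * m1) = (a + (k - 1) * b) + q ^ L * (n1 + (k - 1) * m1)"
        by (simp add: algebra_simps)
      have "q ^ L * (n1 + (k - 1) * m1) \<le> q ^ L * (k * K)" using nk by simp
      hence "(a + (k - 1) * b) + q ^ L * (n1 + (k - 1) * m1) < q ^ L + q ^ L * (k * K)" using abL by linarith
      also have "\<dots> = q ^ L * R" unfolding R_def by (simp add: algebra_simps)
      finally have "a + q ^ L * n1 + (k - 1) * (b + q ^ L * m1) < q ^ L * R" unfolding eq1 .
      thus "y \<in> G" unfolding G_def using ab(2) Pa m_lt QR a(2) by auto
    qed
    have "card F \<le> card G" using card_inj_on_le[OF inj sub finG] .
    hence c1: "M * (M - 1) \<le> card Pats * card G" using wc cSq unfolding F_def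
      by (metis le_trans mult_le_mono2)
    have "N \<le> 2 * D * (M - 1)" using N NDM M1 by (simp add: diff_mult_distrib2)
    moreover have "N \<le> 2 * D * M" using N NDM by linarith
    ultimately have "N * N \<le> (2 * D * M) * (2 * D * (M - 1))" by (intro mult_le_mono) auto
    also have "\<dots> = 4 * D ^ 2 * (M * (M - 1))" by (simp add: power2_eq_square ac_simps)
    also have "\<dots> \<le> 4 * D ^ 2 * (card Pats * card G)" using c1 by simp
    finally have "real (N * N) \<le> real (4 * D ^ 2 * (card Pats * card G))" by linarith
    hence "real N ^ 2 \<le> 4 * real D ^ 2 * real (card Pats) * real (card G)"
      by (simp add: power2_eq_square ac_simps)
    hence "cc * real N ^ 2 \<le> real (card G)" unfolding cc_def using Dpos cP
      by (simp add: field_simps)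
    thus ?thesis unfolding G_def .
  qed
  show ?thesis
    by (intro exI[of _ cc] conjI ccpos eventually_sequentiallyI[of "4 * D"]) (rule main)
qed




lemma count_upper:
  "real (card {(n, m). 1 \<le> m \<and> m < N \<and> n + (k - 1) * m < N \<and> P n m}) \<le> 1 * real N ^ 2"
proof -
  have "{(n, m). 1 \<le> m \<and> m < N \<and> n + (k - 1) * m < N \<and> P n m} \<subseteq> {..<N} \<times> {..<N}" by auto
  hence "card {(n, m). 1 \<le> m \<and> m < N \<and> n + (k - 1) * m < N \<and> P n m} \<le> card ({..<N} \<times> {..<N})"
    by (intro card_mono) auto
  also have "\<dots> = N ^ 2" by (simp add: power2_eq_square)
  finally show ?thesis by (simp add: of_nat_le_iff[symmetric] del: of_nat_le_iff)
qed

lemma count_both: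
  fixes pat :: "nat \<Rightarrow> nat \<Rightarrow> 'p" and P :: "nat \<Rightarrow> nat \<Rightarrow> bool"
  assumes q: "q \<ge> 2" and k: "k \<ge> 1" and fin: "finite Pats" and pin: "\<forall>a b. pat a b \<in> Pats"
  and key: "\<forall>w\<in>Pats. \<exists>n1 m1. \<forall>L a b. a + (k - 1) * b < q ^ L \<and> pat a b = w \<longrightarrow> P (a + q ^ L * n1) (b + q ^ L * m1)"
  shows "\<exists>c C. c > 0 \<and> C > 0 \<and> (\<forall>\<^sub>F N in sequentially.
      c * real N ^ 2 \<le> real (card {(n, m). 1 \<le> m \<and> m < N \<and> n + (k - 1) * m < N \<and> P n m}) \<and>
      real (card {(n, m). 1 \<le> m \<and> m < N \<and> n + (k - 1) * m < N \<and> P n m}) \<le> C * real N ^ 2)"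
proof -
  obtain c where "c > 0" and ev: "\<forall>\<^sub>F N in sequentially. c * real N ^ 2 \<le> real (card {(n, m). 1 \<le> m \<and> m < N \<and> n + (k - 1) * m < N \<and> P n m})"
    using count_lower[OF q k fin pin key] by blast
  have "\<forall>\<^sub>F N in sequentially.
      c * real N ^ 2 \<le> real (card {(n, m). 1 \<le> m \<and> m < N \<and> n + (k - 1) * m < N \<and> P n m}) \<and>
      real (card {(n, m). 1 \<le> m \<and> m < N \<and> n + (k - 1) * m < N \<and> P n m}) \<le> 1 * real N ^ 2"
    using ev by eventually_elim (use count_upper in blast)
  thus ?thesis using \<open>c > 0\<close> by (intro exI[of _ c] exI[of _ 1]) simp
qed

lemma box_key:
  fixes x y z A B :: real
  assumes D: "D' \<ge> (1::nat)" and x: "0 \<le> x" "x < 1" and w: "w = nat \<lfloor>x * real D'\<rfloor>"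
    and z: "A < z" "z < B - 1 / real D'" and fz: "frac (real w / real D' + y) = z"
    and AB: "0 \<le> A" "B \<le> 1"
  shows "frac (x + y) \<in> {A<..<B}"
proof -
  have D0: "real D' > 0" using D by simp
  have f0: "\<lfloor>x * real D'\<rfloor> \<ge> 0" using x D0 by simp
  have rw: "real w = of_int \<lfloor>x * real D'\<rfloor>" using w f0 by simp
  have lo: "real w \<le> x * real D'" unfolding rw by linarith
  have hi: "x * real D' < real w + 1" unfolding rw by linarith
  define t where "t = x - real w / real D'"
  have t0: "0 \<le> t" unfolding t_def using lo D0 by (simp add: field_simps)
  have "t * real D' = x * real D' - real w" unfolding t_def using D0 by (simp add: field_simps)
  hence "t * real D' < 1" using hi by linarith
  hence t1: "t < 1 / real D'" using D0 by (simp add: pos_less_divide_eq)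
  have "frac (x + y) = frac (t + (real w / real D' + y))" unfolding t_def by (simp add: algebra_simps)
  also have "\<dots> = frac (t + z)" unfolding fz[symmetric] by simp
  also have "\<dots> = t + z" using t0 t1 z AB by (subst frac_eq) auto
  finally show ?thesis using t0 t1 z by auto
qed




lemma part2:
  fixes q Q k :: nat and r :: "nat \<Rightarrow> nat"
  assumes q: "q \<ge> 2" and H: "Q \<ge> 1 \<and> coprime Q (q - 1) \<and> k \<ge> 1 \<and> (\<forall>j<k. r j < Q)"
  shows "(\<exists>n m. m \<ge> 1 \<and> (\<forall>j<k. digit_sum q (n + j * m) mod Q = r j mod Q))
     \<and> (\<exists>c C. c > 0 \<and> C > 0 \<and>
          (\<forall>\<^sub>F N in sequentially.
             c * real N ^ 2 \<le> real (card {(n, m). 1 \<le> m \<and> m < N \<and> n + (k - 1) * m < N \<and>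
                  (\<forall>j<k. digit_sum q (n + j * m) mod Q = r j mod Q)}) \<and>
             real (card {(n, m). 1 \<le> m \<and> m < N \<and> n + (k - 1) * m < N \<and>
                  (\<forall>j<k. digit_sum q (n + j * m) mod Q = r j mod Q)}) \<le> C * real N ^ 2))"
proof
  from H have Q1: "Q \<ge> 1" and cop: "coprime Q (q - 1)" and k1: "k \<ge> 1" by auto
  show "\<exists>n m. m \<ge> 1 \<and> (\<forall>j<k. digit_sum q (n + j * m) mod Q = r j mod Q)"
    using exist2[OF q k1 Q1 cop, of r] by auto
  define Pats where "Pats = PiE {..<k} (\<lambda>_. {..<Q})"
  define pat where "pat a b = restrict (\<lambda>j. digit_sum q (a + j * b) mod Q) {..<k}" for a b
  have fin: "finite Pats" unfolding Pats_def by (intro finite_PiE) auto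
  have pin: "\<forall>a b. pat a b \<in> Pats" unfolding Pats_def pat_def using Q1 by (auto simp: PiE_iff)
  have key: "\<forall>w\<in>Pats. \<exists>n1 m1. \<forall>L a b. a + (k - 1) * b < q ^ L \<and> pat a b = w \<longrightarrow>
     (\<lambda>n m. \<forall>j<k. digit_sum q (n + j * m) mod Q = r j mod Q) (a + q ^ L * n1) (b + q ^ L * m1)"
  proof
    fix w assume "w \<in> Pats"
    obtain n1 m1 where nm: "\<forall>j<k. digit_sum q (n1 + j * m1) mod Q = (r j + (Q - 1) * w j) mod Q"
      using exist2[OF q k1 Q1 cop, of "\<lambda>j. r j + (Q - 1) * w j"] by auto
    have "\<forall>j<k. digit_sum q (a + q ^ L * n1 + j * (b + q ^ L * m1)) mod Q = r j mod Q"
      if ab: "a + (k - 1) * b < q ^ L" "pat a b = w" for L a b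
    proof (intro allI impI)
      fix j assume j: "j < k"
      have "j * b \<le> (k - 1) * b" using j by (intro mult_le_mono1) simp
      hence lt: "a + j * b < q ^ L" using ab(1) by linarith
      have eq: "a + q ^ L * n1 + j * (b + q ^ L * m1) = (a + j * b) + q ^ L * (n1 + j * m1)"
        by (simp add: algebra_simps)
      have wj: "digit_sum q (a + j * b) mod Q = w j" using ab(2) j unfolding pat_def
        by (metis lessThan_iff restrict_apply')
      have "digit_sum q (a + q ^ L * n1 + j * (b + q ^ L * m1)) = digit_sum q (a + j * b) + digit_sum q (n1 + j * m1)"
        unfolding eq by (rule ds_concat[OF q lt])
      hence "digit_sum q (a + q ^ L * n1 + j * (b + q ^ L * m1)) mod Q
           = (digit_sum q (a + j * b) mod Q + digit_sum q (n1 + j * m1) mod Q) mod Q"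
        by (simp add: mod_add_eq)
      also have "\<dots> = (w j + (r j + (Q - 1) * w j) mod Q) mod Q" using wj nm j by simp
      also have "\<dots> = (w j + (r j + (Q - 1) * w j)) mod Q" by (simp add: mod_add_right_eq)
      also have "w j + (r j + (Q - 1) * w j) = r j + Q * w j" using Q1 by (cases Q) auto
      also have "(r j + Q * w j) mod Q = r j mod Q" by simp
      finally show "digit_sum q (a + q ^ L * n1 + j * (b + q ^ L * m1)) mod Q = r j mod Q" .
    qed
    thus "\<exists>n1 m1. \<forall>L a b. a + (k - 1) * b < q ^ L \<and> pat a b = w \<longrightarrow>
     (\<lambda>n m. \<forall>j<k. digit_sum q (n + j * m) mod Q = r j mod Q) (a + q ^ L * n1) (b + q ^ L * m1)"
      by blast
  qed
  show "\<exists>c C. c > 0 \<and> C > 0 \<and>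
          (\<forall>\<^sub>F N in sequentially.
             c * real N ^ 2 \<le> real (card {(n, m). 1 \<le> m \<and> m < N \<and> n + (k - 1) * m < N \<and>
                  (\<forall>j<k. digit_sum q (n + j * m) mod Q = r j mod Q)}) \<and>
             real (card {(n, m). 1 \<le> m \<and> m < N \<and> n + (k - 1) * m < N \<and>
                  (\<forall>j<k. digit_sum q (n + j * m) mod Q = r j mod Q)}) \<le> C * real N ^ 2)"
    using count_both[OF q k1 fin pin key] by simp
qed




lemma nat_floor_lt: assumes "0 < n" "y < real n" shows "nat \<lfloor>y\<rfloor> < n"
proof -
  have "\<lfloor>y\<rfloor> < int n" using assms(2) by (simp add: floor_less_iff)
  thus ?thesis using assms(1) by (cases "0 \<le> \<lfloor>y\<rfloor>") (simp_all add: nat_less_iff)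
qed

lemma part1:
  fixes q k :: nat and \<alpha> :: real and I :: "nat \<Rightarrow> real set"
  assumes q: "q \<ge> 2" and H: "\<alpha> \<notin> \<rat> \<and> k \<ge> 1 \<and>
       (\<forall>j<k. I j \<subseteq> {0..<1} \<and> is_interval (I j) \<and>
              (\<exists>a b. a < b \<and> a \<in> I j \<and> b \<in> I j))"
  shows "(\<exists>n m. m \<ge> 1 \<and> (\<forall>j<k. frac (\<alpha> * real (digit_sum q (n + j * m))) \<in> I j))
     \<and> (\<exists>c C. c > 0 \<and> C > 0 \<and>
          (\<forall>\<^sub>F N in sequentially.
             c * real N ^ 2 \<le> real (card {(n, m). 1 \<le> m \<and> m < N \<and> n + (k - 1) * m < N \<and>
                  (\<forall>j<k. frac (\<alpha> * real (digit_sum q (n + j * m))) \<in> I j)}) \<and>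
             real (card {(n, m). 1 \<le> m \<and> m < N \<and> n + (k - 1) * m < N \<and>
                  (\<forall>j<k. frac (\<alpha> * real (digit_sum q (n + j * m))) \<in> I j)}) \<le> C * real N ^ 2))"
proof
  from H have irr: "\<alpha> \<notin> \<rat>" and k1: "k \<ge> 1" by auto
  from H obtain A B where AB: "\<forall>j<k. A j < B j \<and> A j \<in> I j \<and> B j \<in> I j" by metis
  have sub: "{A j<..<B j} \<subseteq> I j" if "j < k" for j
  proof
    fix x assume "x \<in> {A j<..<B j}"
    moreover have "is_interval (I j)" using H that by auto
    ultimately show "x \<in> I j" using AB that unfolding is_interval_1 by (meson greaterThanLessThan_iff less_imp_le)
  qed
  have rng: "0 \<le> A j \<and> B j < 1" if "j < k" for j
    using AB H that by fastforce
  have lh: "\<forall>j<k. 0 \<le> A j \<and> A j < B j \<and> B j \<le> 1" using rng AB by (auto intro: less_imp_le)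
  show "\<exists>n m. m \<ge> 1 \<and> (\<forall>j<k. frac (\<alpha> * real (digit_sum q (n + j * m))) \<in> I j)"
  proof -
    obtain n m where "1 \<le> m" and h: "\<forall>j<k. frac ((\<lambda>_. 0) j + \<alpha> * real (digit_sum q (n + j * m))) \<in> {A j<..<B j}"
      using exist1[OF q k1 irr lh, of "\<lambda>_. 0"] by blast
    have "frac (\<alpha> * real (digit_sum q (n + j * m))) \<in> I j" if "j < k" for j
      using h sub[OF that] that by (auto simp: subset_iff)
    thus ?thesis using \<open>1 \<le> m\<close> by blast
  qed
  define \<delta> where "\<delta> = Min ((\<lambda>j. B j - A j) ` {..<k})"
  have "0 \<in> {..<k}" using k1 by simp
  hence "{..<k} \<noteq> {}" by blast
  hence "\<delta> > 0" unfolding \<delta>_def using AB by (subst Min_gr_iff) auto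
  then obtain n0 where n0: "inverse (real (Suc n0)) < \<delta>" using reals_Archimedean by blast
  define D' where "D' = Suc n0"
  have D1: "D' \<ge> 1" and D0: "real D' > 0" unfolding D'_def by auto
  have gap: "1 / real D' < B j - A j" if "j < k" for j
  proof -
    have "\<delta> \<le> B j - A j" unfolding \<delta>_def using that by (intro Min_le) auto
    thus ?thesis using n0 unfolding D'_def by (simp add: divide_inverse)
  qed
  define Pats where "Pats = PiE {..<k} (\<lambda>_. {..<D'})"
  define pat where "pat a b = restrict (\<lambda>j. nat \<lfloor>frac (\<alpha> * real (digit_sum q (a + j * b))) * real D'\<rfloor>) {..<k}" for a b
  have fin: "finite Pats" unfolding Pats_def by (intro finite_PiE) auto
  have pin: "\<forall>a b. pat a b \<in> Pats"
  proof (intro allI)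
    fix a b
    have "nat \<lfloor>frac (\<alpha> * real (digit_sum q (a + j * b))) * real D'\<rfloor> < D'" for j
      by (rule nat_floor_lt) (use D1 D0 frac_lt_1 in auto)
    thus "pat a b \<in> Pats" unfolding Pats_def pat_def by (auto simp: PiE_iff)
  qed
  have key: "\<forall>w\<in>Pats. \<exists>n1 m1. \<forall>L a b. a + (k - 1) * b < q ^ L \<and> pat a b = w \<longrightarrow>
     (\<lambda>n m. \<forall>j<k. frac (\<alpha> * real (digit_sum q (n + j * m))) \<in> I j) (a + q ^ L * n1) (b + q ^ L * m1)"
  proof
    fix w assume "w \<in> Pats"
    have lh2: "\<forall>j<k. 0 \<le> A j \<and> A j < B j - 1 / real D' \<and> B j - 1 / real D' \<le> 1"
    proof (intro allI impI conjI)
      fix j assume j: "j < k"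
      show "0 \<le> A j" using lh j by blast
      show "A j < B j - 1 / real D'" using gap[OF j] by linarith
      have "0 < 1 / real D'" using D0 by simp
      moreover have "B j \<le> 1" using lh j by blast
      ultimately show "B j - 1 / real D' \<le> 1" by linarith
    qed
    obtain n1 m1 where nm: "\<forall>j<k. frac (real (w j) / real D' + \<alpha> * real (digit_sum q (n1 + j * m1)))
         \<in> {A j<..<B j - 1 / real D'}"
      using exist1[OF q k1 irr lh2, of "\<lambda>j. real (w j) / real D'"] by blast
    have "\<forall>j<k. frac (\<alpha> * real (digit_sum q (a + q ^ L * n1 + j * (b + q ^ L * m1)))) \<in> I j"
      if ab: "a + (k - 1) * b < q ^ L" "pat a b = w" for L a b
    proof (intro allI impI)
      fix j assume j: "j < k"
      have "j * b \<le> (k - 1) * b" using j by (intro mult_le_mono1) simp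
      hence lt: "a + j * b < q ^ L" using ab(1) by linarith
      have eq: "a + q ^ L * n1 + j * (b + q ^ L * m1) = (a + j * b) + q ^ L * (n1 + j * m1)"
        by (simp add: algebra_simps)
      have ds: "digit_sum q (a + q ^ L * n1 + j * (b + q ^ L * m1)) = digit_sum q (a + j * b) + digit_sum q (n1 + j * m1)"
        unfolding eq by (rule ds_concat[OF q lt])
      define x where "x = frac (\<alpha> * real (digit_sum q (a + j * b)))"
      define y where "y = \<alpha> * real (digit_sum q (n1 + j * m1))"
      have wj: "w j = nat \<lfloor>x * real D'\<rfloor>" using ab(2) j unfolding pat_def x_def
        by (metis lessThan_iff restrict_apply')
      have "frac (\<alpha> * real (digit_sum q (a + q ^ L * n1 + j * (b + q ^ L * m1)))) = frac (x + y)"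
        unfolding ds x_def y_def by (simp add: distrib_left)
      also have "\<dots> \<in> {A j<..<B j}"
      proof (rule box_key[OF D1 _ _ wj])
        show "0 \<le> x" "x < 1" unfolding x_def by (auto simp: frac_lt_1)
        show "A j < frac (real (w j) / real D' + y)" "frac (real (w j) / real D' + y) < B j - 1 / real D'"
          using nm j unfolding y_def by auto
        show "0 \<le> A j" "B j \<le> 1" using lh j by auto
      qed simp
      finally show "frac (\<alpha> * real (digit_sum q (a + q ^ L * n1 + j * (b + q ^ L * m1)))) \<in> I j"
        using sub j by blast
    qed
    thus "\<exists>n1 m1. \<forall>L a b. a + (k - 1) * b < q ^ L \<and> pat a b = w \<longrightarrow>
     (\<lambda>n m. \<forall>j<k. frac (\<alpha> * real (digit_sum q (n + j * m))) \<in> I j) (a + q ^ L * n1) (b + q ^ L * m1)"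
      by blast
  qed
  show "\<exists>c C. c > 0 \<and> C > 0 \<and>
          (\<forall>\<^sub>F N in sequentially.
             c * real N ^ 2 \<le> real (card {(n, m). 1 \<le> m \<and> m < N \<and> n + (k - 1) * m < N \<and>
                  (\<forall>j<k. frac (\<alpha> * real (digit_sum q (n + j * m))) \<in> I j)}) \<and>
             real (card {(n, m). 1 \<le> m \<and> m < N \<and> n + (k - 1) * m < N \<and>
                  (\<forall>j<k. frac (\<alpha> * real (digit_sum q (n + j * m))) \<in> I j)}) \<le> C * real N ^ 2)"
    using count_both[OF q k1 fin pin key] by simp
qed


theorem theoremD:
  fixes q :: nat
  assumes "q \<ge> 2"
  shows
   "(\<forall>(\<alpha>::real) (k::nat) (I::nat \<Rightarrow> real set).
       \<alpha> \<notin> \<rat> \<and> k \<ge> 1 \<and>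
       (\<forall>j<k. I j \<subseteq> {0..<1} \<and> is_interval (I j) \<and>
              (\<exists>a b. a < b \<and> a \<in> I j \<and> b \<in> I j))
     \<longrightarrow>
       (\<exists>n m. m \<ge> 1 \<and> (\<forall>j<k. frac (\<alpha> * real (digit_sum q (n + j * m))) \<in> I j))
     \<and> (\<exists>c C. c > 0 \<and> C > 0 \<and>
          (\<forall>\<^sub>F N in sequentially.
             c * real N ^ 2 \<le> real (card {(n, m). 1 \<le> m \<and> m < N \<and> n + (k - 1) * m < N \<and>
                  (\<forall>j<k. frac (\<alpha> * real (digit_sum q (n + j * m))) \<in> I j)}) \<and>
             real (card {(n, m). 1 \<le> m \<and> m < N \<and> n + (k - 1) * m < N \<and>
                  (\<forall>j<k. frac (\<alpha> * real (digit_sum q (n + j * m))) \<in> I j)}) \<le> C * real N ^ 2)))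
  \<and>
   (\<forall>(Q::nat) (k::nat) (r::nat \<Rightarrow> nat).
       Q \<ge> 1 \<and> coprime Q (q - 1) \<and> k \<ge> 1 \<and> (\<forall>j<k. r j < Q)
     \<longrightarrow>
       (\<exists>n m. m \<ge> 1 \<and> (\<forall>j<k. digit_sum q (n + j * m) mod Q = r j mod Q))
     \<and> (\<exists>c C. c > 0 \<and> C > 0 \<and>
          (\<forall>\<^sub>F N in sequentially.
             c * real N ^ 2 \<le> real (card {(n, m). 1 \<le> m \<and> m < N \<and> n + (k - 1) * m < N \<and>
                  (\<forall>j<k. digit_sum q (n + j * m) mod Q = r j mod Q)}) \<and>
             real (card {(n, m). 1 \<le> m \<and> m < N \<and> n + (k - 1) * m < N \<and>
                  (\<forall>j<k. digit_sum q (n + j * m) mod Q = r j mod Q)}) \<le> C * real N ^ 2)))"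
  using part1[OF assms] part2[OF assms] by blast

end
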